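(* Let $k$ be an odd positive integer. Then $$-\frac{3}{8k^3}\sum_{n=1}^{k-1}\cot\!\Big(\frac{2\pi n}{k}\Big)\cot\!\Big(\frac{\pi n}{k}\Big)\csc^2\!\Big(\frac{\pi n}{k}\Big)=-\frac{(k^2-1)(k^2-19)}{240k^3}.$$ *)

theory Defs
  imports "HOL-Analysis.Analysis"
begin

end

theory Submission
  imports Defs "HOL-Computational_Algebra.Fundamental_Theorem_Algebra"
begin

lemma sum_pairs: "(\<Sum>j<2*N. f j) = (\<Sum>l<N. f (2*l) + f (2*l+1))" for f :: "nat \<Rightarrow> 'a::comm_monoid_add"
  by (induction N) (simp_all add: algebra_simps)

lemma sinA:
  fixes x :: real
  assumes "sin x \<noteq> 0"
  shows "sin (real (2*m+1) * x) = sin x ^ (2*m+1) *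
     (\<Sum>l\<le>m. (-1)^l * real ((2*m+1) choose (2*l+1)) * (cot x ^ 2) ^ (m-l))"
proof -
  define n where "n = 2*m+1"
  define c where "c = cot x"
  have 1: "cis x = complex_of_real (sin x) * (\<i> + of_real c)"
    using assms by (simp add: complex_eq_iff c_def cot_def)
  have 2: "sin (real n * x) = Im (cis x ^ n)" by (simp only: Complex.DeMoivre cis.sel)
  have 3: "cis x ^ n = of_real (sin x ^ n) * (\<i> + of_real c)^n"
    by (simp add: 1 power_mult_distrib)
  have 4: "(\<i> + of_real c)^n = (\<Sum>j\<le>n. of_nat (n choose j) * \<i>^j * of_real c^(n-j))"
    by (rule binomial_ring)
  have 5: "Im (\<Sum>j\<le>n. of_nat (n choose j) * \<i>^j * complex_of_real c^(n-j))
       = (\<Sum>j\<le>n. real (n choose j) * c^(n-j) * Im (\<i>^j))"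
    by (simp add: Im_sum mult.commute mult.left_commute flip: of_real_power)
  have ie: "Im (\<i>^(2*l)) = 0" for l
  proof -
    have "\<i>^(2*l) = (-1::complex)^l" by (simp add: power_mult)
    then show ?thesis by (cases "even l") simp_all
  qed
  have io: "Im (\<i>^(2*l+1)) = (-1)^l" for l
  proof -
    have "\<i>^(2*l+1) = \<i> * (-1::complex)^l" by (simp add: power_mult)
    then show ?thesis by (cases "even l") simp_all
  qed
  have 6: "(\<Sum>j\<le>n. real (n choose j) * c^(n-j) * Im (\<i>^j))
     = (\<Sum>l<m+1. real (n choose (2*l+1)) * c^(n-(2*l+1)) * (-1)^l)"
  proof -
    have "{..n} = {..<2*(m+1)}" by (auto simp: n_def)
    then show ?thesis by (simp add: sum_pairs ie io)
  qed
  have 7: "c^(n-(2*l+1)) = (c^2)^(m-l)" if "l < m+1" for l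
  proof -
    have "n-(2*l+1) = 2*(m-l)" using that by (simp add: n_def)
    then show ?thesis by (simp add: power_mult)
  qed
  have "sin (real n * x) = sin x ^ n * (\<Sum>l<m+1. real (n choose (2*l+1)) * c^(n-(2*l+1)) * (-1)^l)"
    unfolding 2 3 4 using 5 6 by simp
  also have "\<dots> = sin x ^ n * (\<Sum>l\<le>m. (-1)^l * real (n choose (2*l+1)) * (c^2)^(m-l))"
  proof -
    have eq: "(\<Sum>l<m+1. real (n choose (2*l+1)) * c^(n-(2*l+1)) * (-1)^l)
       = (\<Sum>l<m+1. (-1)^l * real (n choose (2*l+1)) * (c^2)^(m-l))"
    proof (rule sum.cong)
      fix l assume "l \<in> {..<m+1}"
      then have "c^(n-(2*l+1)) = (c^2)^(m-l)" by (intro 7) auto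
      then show "real (n choose (2*l+1)) * c^(n-(2*l+1)) * (-1)^l = (-1)^l * real (n choose (2*l+1)) * (c^2)^(m-l)"
        by simp
    qed simp
    have st: "{..<m+1} = {..m}" by auto
    show ?thesis using eq by (simp only: st)
  qed
  finally show ?thesis by (simp add: n_def c_def)
qed

lemma lin_mult_coeff:
  "coeff (p * [:-a, 1:]) (Suc j) = coeff p j - a * coeff p (Suc j)"
  "coeff (p * [:-a, 1:]) 0 = - a * coeff p 0"
  for p :: "'a::comm_ring_1 poly"
  by (simp_all add: coeff_pCons algebra_simps)

lemma vieta0: "j > N \<Longrightarrow> coeff (\<Prod>i<N. [:- r i, 1:]) j = (0::'a::comm_ring_1)"
proof (induction N arbitrary: j)
  case 0 then show ?case by simp
next
  case (Suc N)
  then obtain j' where j: "j = Suc j'" by (cases j) auto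
  show ?case using Suc by (simp add: j lin_mult_coeff)
qed

lemma vieta1: "coeff (\<Prod>i<N. [:- r i, 1:]) N = (1::'a::comm_ring_1)"
  by (induction N) (simp_all add: lin_mult_coeff vieta0)

lemma vieta2: "coeff (\<Prod>i<Suc N. [:- r i, 1:]) N = - (\<Sum>i<Suc N. r i :: 'a::comm_ring_1)"
proof (induction N)
  case 0 then show ?case by simp
next
  case (Suc N)
  have "(\<Prod>i<Suc (Suc N). [:- r i, 1:]) = (\<Prod>i<Suc N. [:- r i, 1:]) * [:- r (Suc N), 1:]"
    by simp
  then show ?case using Suc by (simp add: lin_mult_coeff vieta1 del: prod.lessThan_Suc)
qed

lemma vieta3: "2 * coeff (\<Prod>i<Suc (Suc N). [:- r i, 1:]) N
   = (\<Sum>i<Suc (Suc N). r i)^2 - (\<Sum>i<Suc (Suc N). (r i)^2 :: 'a::comm_ring_1)"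
proof (induction N)
  case 0 then show ?case by (simp add: power2_eq_square algebra_simps)
next
  case (Suc N)
  have eqp: "(\<Prod>i<Suc (Suc (Suc N)). [:- r i, 1:]) = (\<Prod>i<Suc (Suc N). [:- r i, 1:]) * [:- r (Suc (Suc N)), 1:]"
    by simp
  have "2 * coeff (\<Prod>i<Suc (Suc (Suc N)). [:- r i, 1:]) (Suc N)
     = 2 * coeff (\<Prod>i<Suc (Suc N). [:- r i, 1:]) N - 2 * r (Suc (Suc N)) * coeff (\<Prod>i<Suc (Suc N). [:- r i, 1:]) (Suc N)"
    unfolding eqp lin_mult_coeff by (simp add: algebra_simps)
  also have "\<dots> = (\<Sum>i<Suc (Suc N). r i)^2 - (\<Sum>i<Suc (Suc N). (r i)^2) + 2 * r (Suc (Suc N)) * (\<Sum>i<Suc (Suc N). r i)"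
    using Suc vieta2[where N="Suc N" and r=r] by (simp del: prod.lessThan_Suc sum.lessThan_Suc)
  also have "\<dots> = (\<Sum>i<Suc (Suc (Suc N)). r i)^2 - (\<Sum>i<Suc (Suc (Suc N)). (r i)^2)"
    by (simp only: sum.lessThan_Suc[of _ "Suc (Suc N)"]) (simp add: power2_eq_square algebra_simps)
  finally show ?case .
qed

lemma summand:
  fixes y :: real
  assumes "sin y \<noteq> 0" "cos y \<noteq> 0"
  shows "cot (2 * y) * cot y * (1 / sin y) ^ 2 = (cot y ^ 4 - 1) / 2"
proof -
  have e2: "sin y * sin y + cos y * (cos y * (cos y * cos y)) = cos y * cos y + sin y * (sin y * (sin y * sin y))"
    using sin_cos_squared_add[of y] unfolding power2_eq_square by algebra
  have c2: "cot (2*y) = (cos y ^2 - sin y ^2) / (2 * sin y * cos y)"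
    unfolding cot_def sin_double cos_double by simp
  show ?thesis unfolding c2 using assms e2
    apply (simp add: cot_def field_simps power2_eq_square power4_eq_xxxx)
    using sin_cos_squared_add[of y] unfolding power2_eq_square by algebra
qed

lemma choose3: "real (n choose 3) = real n * (real n - 1) * (real n - 2) / 6"
  by (simp add: binomial_gbinomial gbinomial_prod_rev numeral_eq_Suc prod.atLeast0_lessThan_Suc)

lemma choose5: "real (n choose 5) = real n * (real n - 1) * (real n - 2) * (real n - 3) * (real n - 4) / 120"
  by (simp add: binomial_gbinomial gbinomial_prod_rev numeral_eq_Suc prod.atLeast0_lessThan_Suc)

lemma key_sum:
  fixes m :: nat
  assumes m: "m \<ge> 1"
  defines "k \<equiv> 2*m+1"
  defines "t \<equiv> (\<lambda>n::nat. cot (pi * real n / real k) ^ 2)"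
  shows "(\<Sum>n=1..m. t n ^ 2) = (real (k choose 3) / real k)^2 - 2 * real (k choose 5) / real k"
proof -
  have kpos: "real k > 0" by (simp add: k_def)
  have k0: "0 < k" by (simp add: k_def)
  define cQ where "cQ i = (-1)^(m-i) * real (k choose (2*(m-i)+1))" for i
  define Q :: "complex poly" where "Q = (\<Sum>i\<le>m. monom (of_real (cQ i)) i)"
  have coeffQ: "coeff Q j = (if j \<le> m then of_real (cQ j) else 0)" for j
    by (simp add: Q_def coeff_sum coeff_monom)
  have cQm: "cQ m = real k" by (simp add: cQ_def)
  have degQ: "degree Q = m"
  proof (rule antisym)
    show "degree Q \<le> m" by (rule degree_le) (simp add: coeffQ)
    have kne: "(of_nat k :: complex) \<noteq> 0" by (simp only: of_nat_eq_0_iff k_def)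
    show "m \<le> degree Q" by (rule le_degree) (simp add: coeffQ cQm kne k0)
  qed
  have "lead_coeff Q = of_real (cQ m)" by (simp add: degQ coeffQ)
  then have lcQ: "lead_coeff Q = of_nat k" by (simp add: cQm)
  have xrange: "0 < pi * real n / real k" "pi * real n / real k < pi/2" "pi * real n / real k < pi" if "n \<in> {1..m}" for n
  proof -
    show "0 < pi * real n / real k" using that kpos by auto
    have "2 * real n < real k" using that by (simp add: k_def)
    then show "pi * real n / real k < pi/2" using kpos pi_gt_zero by (simp add: field_simps)
    then show "pi * real n / real k < pi" using pi_gt_zero by linarith
  qed
  have rootQ: "poly Q (of_real (t n)) = 0" if n: "n \<in> {1..m}" for n
  proof -
    define y where "y = pi * real n / real k"
    have y1: "0 < y" using xrange[OF n] unfolding y_def by linarith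
    have y2: "y < pi" using xrange[OF n] pi_gt_zero unfolding y_def by linarith
    have sy: "sin y \<noteq> 0" using sin_gt_zero[OF y1 y2] by simp
    have "sin (real k * y) = 0" using kpos by (simp add: y_def)
    then have "sin y ^ k * (\<Sum>l\<le>m. (-1)^l * real (k choose (2*l+1)) * (cot y ^ 2) ^ (m-l)) = 0"
      using sinA[OF sy, of m] by (simp add: k_def)
    then have S: "(\<Sum>l\<le>m. (-1)^l * real (k choose (2*l+1)) * (t n) ^ (m-l)) = 0"
      using sy by (simp add: t_def y_def)
    have "(\<Sum>i\<le>m. cQ i * t n ^ i) = (\<Sum>l\<le>m. (-1)^l * real (k choose (2*l+1)) * (t n) ^ (m-l))"
      by (rule sum.reindex_bij_witness[of _ "\<lambda>l. m - l" "\<lambda>l. m - l"]) (auto simp: cQ_def)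
    then have "(\<Sum>i\<le>m. cQ i * t n ^ i) = 0" using S by simp
    then have "complex_of_real (\<Sum>i\<le>m. cQ i * t n ^ i) = 0" by simp
    then show ?thesis by (simp add: Q_def poly_sum poly_monom)
  qed
  obtain root where R0: "smult (lead_coeff Q) (\<Prod>i<degree Q. [:-root i, 1:]) = Q"
    using complex_poly_decompose' by blast
  have R: "Q = smult (of_nat k) (\<Prod>i<m. [:-root i, 1:])" using R0 lcQ by (simp add: degQ)
  have tinj: "inj_on t {1..m}"
  proof (rule inj_onI)
    fix a b assume a: "a \<in> {1..m}" and b: "b \<in> {1..m}" and eq: "t a = t b"
    define ya where "ya = pi * real a / real k"
    define yb where "yb = pi * real b / real k"
    have ca: "cot ya > 0" using xrange[OF a] by (intro cot_gt_zero) (auto simp: ya_def)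
    have cb: "cot yb > 0" using xrange[OF b] by (intro cot_gt_zero) (auto simp: yb_def)
    have "cot ya = cot yb" using eq ca cb by (simp add: t_def ya_def yb_def power2_eq_iff_nonneg)
    moreover have sa: "sin ya > 0" using xrange[OF a] by (intro sin_gt_zero) (auto simp: ya_def)
    moreover have sb: "sin yb > 0" using xrange[OF b] by (intro sin_gt_zero) (auto simp: yb_def)
    ultimately have "cos ya * sin yb = cos yb * sin ya" by (simp add: cot_def field_simps)
    then have "sin (yb - ya) = 0" by (simp add: sin_diff mult.commute)
    then obtain i :: int where i: "yb - ya = of_int i * pi" by (auto simp: sin_zero_iff_int2)
    have "\<bar>yb - ya\<bar> < pi" using xrange[OF a] xrange[OF b] unfolding ya_def[symmetric] yb_def[symmetric] by linarith
    then have "\<bar>of_int i\<bar> * pi < 1 * pi" using i by (simp add: abs_mult)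
    then have "\<bar>of_int i :: real\<bar> < 1" using pi_gt_zero by (simp only: mult_less_cancel_right)
    then have "i = 0" by linarith
    then have "ya = yb" using i by simp
    then show "a = b" using kpos by (simp add: ya_def yb_def)
  qed
  define T where "T = (\<lambda>n. complex_of_real (t n)) ` {1..m}"
  have Tinj: "inj_on (\<lambda>n. complex_of_real (t n)) {1..m}"
  proof -
    have "inj_on (of_real :: real \<Rightarrow> complex) (t ` {1..m})" by (rule inj_onI) simp
    then have "inj_on (complex_of_real \<circ> t) {1..m}" by (rule comp_inj_on[OF tinj])
    then show ?thesis unfolding o_def .
  qed
  have cardT: "card T = m" using Tinj by (simp add: T_def card_image)
  have Tsub: "T \<subseteq> root ` {..<m}"
  proof
    fix z assume "z \<in> T"
    then obtain n where n: "n \<in> {1..m}" and z: "z = complex_of_real (t n)" by (auto simp: T_def)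
    have "poly Q z = 0" using rootQ[OF n] z by simp
    then have "(\<Prod>i<m. poly [:-root i, 1:] z) = 0" using kpos by (simp add: R poly_prod)
    then obtain i where "i < m" "poly [:-root i, 1:] z = 0" by auto
    then show "z \<in> root ` {..<m}" by auto
  qed
  have Teq: "T = root ` {..<m}"
    using Tsub card_image_le[of "{..<m}" root] cardT by (intro card_seteq) auto
  have rinj: "inj_on root {..<m}"
    using Teq cardT by (intro eq_card_imp_inj_on) auto
  have sums: "(\<Sum>i<m. g (root i)) = (\<Sum>n=1..m. g (complex_of_real (t n)))" for g
  proof -
    have "(\<Sum>i<m. g (root i)) = (\<Sum>z\<in>root ` {..<m}. g z)" using rinj by (simp add: sum.reindex)
    also have "\<dots> = (\<Sum>z\<in>T. g z)" by (simp add: Teq)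
    also have "\<dots> = (\<Sum>n=1..m. g (complex_of_real (t n)))" using Tinj by (simp add: T_def sum.reindex)
    finally show ?thesis .
  qed
  obtain m' where m': "m = Suc m'" using m by (cases m) auto
  have "coeff Q m' = of_nat k * (- (\<Sum>i<m. root i))"
    by (simp add: R m' vieta2 del: prod.lessThan_Suc sum.lessThan_Suc)
  moreover have "coeff Q m' = of_real (- real (k choose 3))"
    by (simp add: coeffQ cQ_def m' numeral_eq_Suc)
  ultimately have "of_nat k * (\<Sum>i<m. root i) = of_real (real (k choose 3))" by simp
  then have "of_nat k * complex_of_real (\<Sum>n=1..m. t n) = of_real (real (k choose 3))"
    by (simp add: sums[of "\<lambda>z. z"])
  then have "complex_of_real (real k * (\<Sum>n=1..m. t n)) = of_real (real (k choose 3))" by simp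
  then have "real k * (\<Sum>n=1..m. t n) = real (k choose 3)" by (simp only: of_real_eq_iff)
  then have S1: "(\<Sum>n=1..m. t n) = real (k choose 3) / real k" using kpos by (simp add: field_simps)
  show ?thesis
  proof (cases m')
    case 0
    then have "m = 1" using m' by simp
    then have "k = 3" by (simp add: k_def)
    moreover have "(3::nat) choose 5 = 0" by (simp add: binomial_eq_0)
    have "t 1 * 3 = 1" using S1 \<open>m = 1\<close> \<open>k = 3\<close> by simp
    then have t1: "t (Suc 0) = 1/3" by simp
    show ?thesis using \<open>k = 3\<close> \<open>m = 1\<close> t1
      apply (simp add: choose5 power2_eq_square)
      apply (thin_tac "k = 3", thin_tac "m = Suc 0") by algebra
  next
    case (Suc m'')
    have "2 * coeff Q m'' = of_nat k * ((\<Sum>i<m. root i)^2 - (\<Sum>i<m. (root i)^2))"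
    proof -
      have mm: "m = Suc (Suc m'')" using m' Suc by simp
      have "2 * coeff Q m'' = of_nat k * (2 * coeff (\<Prod>i<m. [:-root i, 1:]) m'')"
        by (simp add: R)
      also have "2 * coeff (\<Prod>i<m. [:-root i, 1:]) m'' = (\<Sum>i<m. root i)^2 - (\<Sum>i<m. (root i)^2)"
        unfolding mm by (rule vieta3)
      finally show ?thesis .
    qed
    moreover have "coeff Q m'' = of_real (real (k choose 5))"
      by (simp add: coeffQ cQ_def m' Suc numeral_eq_Suc)
    ultimately have "2 * complex_of_real (real (k choose 5)) = of_nat k * ((\<Sum>i<m. root i)^2 - (\<Sum>i<m. (root i)^2))"
      by simp
    also have "\<dots> = of_real (real k * ((\<Sum>n=1..m. t n)^2 - (\<Sum>n=1..m. (t n)^2)))"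
      by (simp add: sums[of "\<lambda>z. z"] sums[of "\<lambda>z. z^2"])
    finally have "2 * real (k choose 5) = real k * ((\<Sum>n=1..m. t n)^2 - (\<Sum>n=1..m. (t n)^2))"
      by (metis of_real_eq_iff of_real_mult of_real_numeral)
    then have "(\<Sum>n=1..m. (t n)^2) = (\<Sum>n=1..m. t n)^2 - 2 * real (k choose 5) / real k"
      using kpos by (simp add: field_simps)
    then show ?thesis by (simp only: S1)
  qed
qed

theorem mainTheorem7:
  fixes k :: nat
  assumes "odd k" and "k > 0"
  shows "- 3 / (8 * real k ^ 3) *
           (\<Sum>n = 1..k - 1. cot (2 * pi * real n / real k) * cot (pi * real n / real k)
              * (1 / sin (pi * real n / real k)) ^ 2)
         = - ((real k ^ 2 - 1) * (real k ^ 2 - 19)) / (240 * real k ^ 3)"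
proof -
  obtain m where k: "k = 2*m+1" using assms(1) by (auto elim: oddE)
  show ?thesis
  proof (cases "m = 0")
    case True
    then show ?thesis by (simp add: k)
  next
    case False
    then have m1: "m \<ge> 1" by simp
    have kpos: "real k > 0" using assms(2) by simp
    define c where "c n = cot (pi * real n / real k)" for n
    have xr: "0 < pi * real n / real k" "pi * real n / real k < pi" if "n \<in> {1..2*m}" for n
    proof -
      show "0 < pi * real n / real k" using that kpos by auto
      have "real n < real k" using that by (simp add: k)
      then show "pi * real n / real k < pi" using kpos pi_gt_zero by (simp add: field_simps)
    qed
    have sinx: "sin (pi * real n / real k) \<noteq> 0" if "n \<in> {1..2*m}" for n
      using sin_gt_zero[OF xr[OF that]] by simp
    have cosx: "cos (pi * real n / real k) \<noteq> 0" if "n \<in> {1..2*m}" for n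
    proof
      assume "cos (pi * real n / real k) = 0"
      then obtain i :: int where i: "odd i" "pi * real n / real k = of_int i * (pi/2)"
        by (auto simp: cos_zero_iff_int)
      then have "real (2 * n) = of_int i * real k" using kpos pi_gt_zero by (simp add: field_simps)
      then have "of_int (int (2 * n)) = (of_int (i * int k) :: real)" by simp
      then have "int (2 * n) = i * int k" by (simp only: of_int_eq_iff)
      moreover have "even (int (2 * n))" by simp
      ultimately have "even (i * int k)" by metis
      moreover have "odd (i * int k)" using i(1) assms(1) by simp
      ultimately show False by blast
    qed
    have A: "(\<Sum>n = 1..k - 1. cot (2 * pi * real n / real k) * cot (pi * real n / real k)
              * (1 / sin (pi * real n / real k)) ^ 2) = (\<Sum>n=1..2*m. (c n ^ 4 - 1) / 2)"
    proof (rule sum.cong)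
      show "{1..k-1} = {1..2*m}" by (simp add: k)
    next
      fix n assume n: "n \<in> {1..2*m}"
      have e: "2 * pi * real n / real k = 2 * (pi * real n / real k)" by simp
      show "cot (2 * pi * real n / real k) * cot (pi * real n / real k)
              * (1 / sin (pi * real n / real k)) ^ 2 = (c n ^ 4 - 1) / 2"
        unfolding e c_def by (rule summand[OF sinx[OF n] cosx[OF n]])
    qed
    have refl: "c (k - n) ^ 4 = c n ^ 4" if "n \<in> {1..m}" for n
    proof -
      have "real (k - n) = real k - real n" using that by (simp add: k)
      then have "pi * real (k - n) / real k = pi - pi * real n / real k"
        using kpos by (simp add: field_simps)
      then have "c (k - n) = - c n" by (simp add: c_def cot_def)
      then show ?thesis by simp
    qed
    have B: "(\<Sum>n=1..2*m. c n ^ 4) = 2 * (\<Sum>n=1..m. (c n ^ 2) ^ 2)"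
    proof -
      have split: "{1..2*m} = {1..m} \<union> {m+1..2*m}" by auto
      have "(\<Sum>n=1..2*m. c n ^ 4) = (\<Sum>n=1..m. c n ^ 4) + (\<Sum>n=m+1..2*m. c n ^ 4)"
        unfolding split by (rule sum.union_disjoint) auto
      also have "(\<Sum>n=m+1..2*m. c n ^ 4) = (\<Sum>n=1..m. c (k - n) ^ 4)"
        by (rule sum.reindex_bij_witness[of _ "\<lambda>n. k - n" "\<lambda>n. k - n"]) (auto simp: k)
      also have "\<dots> = (\<Sum>n=1..m. c n ^ 4)" by (rule sum.cong) (auto simp: refl)
      finally show ?thesis by (simp flip: power_mult)
    qed
    have C: "(\<Sum>n=1..m. (c n ^ 2) ^ 2) = (real (k choose 3) / real k)^2 - 2 * real (k choose 5) / real k"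
      using key_sum[OF m1] by (simp add: c_def k)
    have D: "(\<Sum>n=1..2*m. (c n ^ 4 - 1) / 2) = ((\<Sum>n=1..2*m. c n ^ 4) - 2 * real m) / 2"
      by (simp add: sum_divide_distrib[symmetric] sum_subtractf)
    define K where "K = real k"
    have m_eq: "real m = (K - 1) / 2" by (simp add: K_def k)
    have ch3: "real (k choose 3) / real k = (K-1)*(K-2)/6"
      using kpos unfolding choose3 K_def by (simp add: field_simps)
    have ch5: "2 * real (k choose 5) / real k = (K-1)*(K-2)*(K-3)*(K-4)/60"
      using kpos unfolding choose5 K_def by (simp add: field_simps)
    have pid: "((K-1)*(K-2)/6)^2 - (K-1)*(K-2)*(K-3)*(K-4)/60 - (K-1)/2 = (K^2-1)*(K^2-19)/90"
      by (simp add: field_simps power2_eq_square)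
    have V: "(\<Sum>n = 1..k - 1. cot (2 * pi * real n / real k) * cot (pi * real n / real k)
              * (1 / sin (pi * real n / real k)) ^ 2) = (K^2-1)*(K^2-19)/90"
    proof -
      have g: "(2 * (a - b) - 2 * c) / 2 = a - b - (c::real)" for a b c by simp
      show ?thesis unfolding A D B C ch3 ch5 m_eq g by (rule pid)
    qed
    show ?thesis unfolding V using kpos unfolding K_def[symmetric] by (simp add: field_simps)
  qed
qed

end
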